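(* Under the standing assumptions and definitions in the context, if $\mathbf{x}^r\in\Gamma$, then $\mathbf{x}^r\in\mathcal{F}(\mathbf{x}^r)$ and the interior of $\mathcal{F}(\mathbf{x}^r)$ is nonempty.
   Context: Problem: minimize $J(\mathbf{x})$ over $\mathbf{x}\in\Gamma\subset\mathbb{R}^n$, where (i) $J:\mathbb{R}^n\to\mathbb{R}^+$ is smooth and strictly convex; (ii) $\Gamma$ is connected and closed with piecewise smooth, non-self-intersecting boundary, and every point of $\Gamma$ lies in some $n$-dimensional convex polytope contained in $\Gamma$. Semi-convex decomposition: $\Gamma=\bigcap_{i=1}^N\Gamma_i$, $\Gamma_i=\{\mathbf{x}:\phi_i(\mathbf{x})\ge 0\}$, $\partial\Gamma_i=\{\mathbf{x}:\phi_i(\mathbf{x})=0\}$, where each $\phi_i:\mathbb{R}^n\to\mathbb{R}$ is continuous, piecewise smooth and semi-convex: there is a positive semidefinite $H_i^*$ such that $\mathbf{x}\mapsto\phi_i(\mathbf{x})+\frac12(\mathbf{x}-\mathbf{x}_0)^TH_i^*(\mathbf{x}-\mathbf{x}_0)$ is convex for every $\mathbf{x}_0$. One-sided directional derivative: $\partial_v\phi_i(\mathbf{x})=\lim_{a\to0^+}(\phi_i(\mathbf{x}+av)-\phi_i(\mathbf{x}))/a$. Sub-differential: $D\phi_i(\mathbf{x})=\{d\in\mathbb{R}^n: d\cdot v\le\partial_v\phi_i(\mathbf{x})\ \forall v\in\mathbb{R}^n\}$. It is assumed that: (1) $D\phi_i(\mathbf{x})\neq\{0\}$ for all $\mathbf{x}$;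 (2) $0\notin D\phi_i(\mathbf{x})$ if $\mathbf{x}\in\partial\Gamma_i$; (3) for any $\mathbf{x}$ with $I:=\{i:\phi_i(\mathbf{x})=0\}\ne\emptyset$ there is $v$ with $\partial_v\phi_i(\mathbf{x})<0$ for all $i\in I$. Optimal sub-gradients at a reference $\mathbf{x}^r$: a unit vector $v$ is a feasible search direction if for every $i$: $\phi_i(\mathbf{x}^r)>0$; or $\phi_i(\mathbf{x}^r)=0$ and some $d\in D\phi_i(\mathbf{x}^r)$ has $v\cdot d\ge0$; or $\phi_i(\mathbf{x}^r)<0$ and some $d\in D\phi_i(\mathbf{x}^r)$ has $v\cdot d>0$. Let $C(\mathbf{x}^r)$ be the set of these, and $v^*=\arg\min_{v\in C(\mathbf{x}^r)}\nabla J(\mathbf{x}^r)\cdot v$ (ties broken lexicographically). Let $DF_i=D\phi_i(\mathbf{x}^r)$ if $\phi_i(\mathbf{x}^r)>0$, $DF_i=\{d\in D\phi_i(\mathbf{x}^r):d\cdot v^*\ge0\}$ if $\phi_i(\mathbf{x}^r)=0$, $DF_i=\{d\in D\phi_i(\mathbf{x}^r):d\cdot v^*>0\}$ if $\phi_i(\mathbf{x}^r)<0$, and $\hat\nabla\phi_i(\mathbf{x}^r)=\arg\min_{d\in DF_i}\nabla J(\mathbf{x}^r)\cdot d/\|d\|$ (with $d/\|d\|:=0$ if $d=0$). Convex feasible set: $\mathcal{F}_i(\mathbf{x}^r)=\Gamma_i$ if $\phi_i$ is concave; $\mathcal{F}_i(\mathbf{x}^r)=\{\mathbf{x}:\phi_i(\mathbf{x}^r)+\hat\nabla\phi_i(\mathbf{x}^r)(\mathbf{x}-\mathbf{x}^r)\ge0\}$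 if $\phi_i$ is convex; $\mathcal{F}_i(\mathbf{x}^r)=\{\mathbf{x}:\phi_i(\mathbf{x}^r)+\hat\nabla\phi_i(\mathbf{x}^r)(\mathbf{x}-\mathbf{x}^r)\ge\frac12(\mathbf{x}-\mathbf{x}^r)^TH_i^*(\mathbf{x}-\mathbf{x}^r)\}$ otherwise; $\mathcal{F}(\mathbf{x}^r)=\bigcap_{i=1}^N\mathcal{F}_i(\mathbf{x}^r)$. *)

theory Defs
  imports "HOL-Analysis.Analysis"
begin

text \<open>Smooth (C-infinity) real functions: everywhere differentiable, and all
  directional derivatives are again smooth (greatest fixed point).\<close>
coinductive smooth_fun :: "('a::euclidean_space \<Rightarrow> real) \<Rightarrow> bool" where
  "\<lbrakk>continuous_on UNIV f; \<forall>x. f differentiable (at x);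
    \<forall>v. smooth_fun (\<lambda>x. frechet_derivative f (at x) v)\<rbrakk> \<Longrightarrow> smooth_fun f"

definition piecewise_smooth :: "('a::euclidean_space \<Rightarrow> real) \<Rightarrow> bool" where
  "piecewise_smooth f \<longleftrightarrow> continuous_on UNIV f \<and>
     (\<exists>G. finite G \<and> G \<noteq> {} \<and> (\<forall>g\<in>G. smooth_fun g) \<and> (\<forall>x. \<exists>g\<in>G. f x = g x))"

definition strictly_convex_on :: "'a::real_vector set \<Rightarrow> ('a \<Rightarrow> real) \<Rightarrow> bool" where
  "strictly_convex_on S f \<longleftrightarrow> convex S \<and> (\<forall>x\<in>S. \<forall>y\<in>S. \<forall>t::real. x \<noteq> y \<and> 0 < t \<and> t < 1 \<longrightarrow>
      f ((1 - t) *\<^sub>R x + t *\<^sub>R y) < (1 - t) * f x + t * f y)"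

definition psd :: "real^'n^'n \<Rightarrow> bool" where
  "psd H \<longleftrightarrow> transpose H = H \<and> (\<forall>y. 0 \<le> y \<bullet> (H *v y))"

definition semi_convex_wrt :: "(real^'n \<Rightarrow> real) \<Rightarrow> real^'n^'n \<Rightarrow> bool" where
  "semi_convex_wrt phi H \<longleftrightarrow> psd H \<and>
     (\<forall>x0. convex_on UNIV (\<lambda>x. phi x + 1/2 * ((x - x0) \<bullet> (H *v (x - x0)))))"

definition dir_deriv :: "('a::real_normed_vector \<Rightarrow> real) \<Rightarrow> 'a \<Rightarrow> 'a \<Rightarrow> real" where
  "dir_deriv phi x v = Lim (at_right (0::real)) (\<lambda>a. (phi (x + a *\<^sub>R v) - phi x) / a)"

definition subdiff :: "('a::real_inner \<Rightarrow> real) \<Rightarrow> 'a \<Rightarrow> 'a set" where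
  "subdiff phi x = {d. \<forall>v. d \<bullet> v \<le> dir_deriv phi x v}"

definition feas_dirs :: "(nat \<Rightarrow> 'a::real_inner \<Rightarrow> real) \<Rightarrow> nat \<Rightarrow> 'a \<Rightarrow> 'a set" where
  "feas_dirs phi N xr = {v. norm v = 1 \<and> (\<forall>i<N.
      0 < phi i xr
    \<or> (phi i xr = 0 \<and> (\<exists>d\<in>subdiff (phi i) xr. 0 \<le> v \<bullet> d))
    \<or> (phi i xr < 0 \<and> (\<exists>d\<in>subdiff (phi i) xr. 0 < v \<bullet> d)))}"

definition lex_less :: "real^('n::{finite,wellorder}) \<Rightarrow> real^('n::{finite,wellorder}) \<Rightarrow> bool" where
  "lex_less v w \<longleftrightarrow> (\<exists>k. v$k < w$k \<and> (\<forall>j<k. v$j = w$j))"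

definition is_opt_dir :: "(real^('n::{finite,wellorder}) \<Rightarrow> real) \<Rightarrow> (nat \<Rightarrow> real^('n::{finite,wellorder}) \<Rightarrow> real)
    \<Rightarrow> nat \<Rightarrow> real^('n::{finite,wellorder}) \<Rightarrow> real^('n::{finite,wellorder}) \<Rightarrow> bool" where
  "is_opt_dir J phi N xr vs \<longleftrightarrow> vs \<in> feas_dirs phi N xr \<and>
     (\<forall>v\<in>feas_dirs phi N xr. frechet_derivative J (at xr) vs \<le> frechet_derivative J (at xr) v) \<and>
     (\<forall>v\<in>feas_dirs phi N xr. frechet_derivative J (at xr) v = frechet_derivative J (at xr) vs
        \<longrightarrow> v = vs \<or> lex_less vs v)"

definition DF :: "(nat \<Rightarrow> 'a::real_inner \<Rightarrow> real) \<Rightarrow> nat \<Rightarrow> 'a \<Rightarrow> 'a \<Rightarrow> 'a set" where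
  "DF phi i xr vs =
     (if 0 < phi i xr then subdiff (phi i) xr
      else if phi i xr = 0 then {d\<in>subdiff (phi i) xr. 0 \<le> d \<bullet> vs}
      else {d\<in>subdiff (phi i) xr. 0 < d \<bullet> vs})"

definition unitize :: "'a::real_normed_vector \<Rightarrow> 'a" where
  "unitize d = (if d = 0 then 0 else d /\<^sub>R norm d)"

definition is_opt_subgrad :: "('a::real_inner \<Rightarrow> real) \<Rightarrow> (nat \<Rightarrow> 'a \<Rightarrow> real) \<Rightarrow> nat \<Rightarrow> 'a \<Rightarrow> 'a \<Rightarrow> 'a \<Rightarrow> bool"
  where "is_opt_subgrad J phi i xr vs g \<longleftrightarrow> g \<in> DF phi i xr vs \<and>
     (\<forall>d\<in>DF phi i xr vs. frechet_derivative J (at xr) (unitize g) \<le> frechet_derivative J (at xr) (unitize d))"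

definition F_i :: "(real^'n \<Rightarrow> real) \<Rightarrow> real^'n^'n \<Rightarrow> real^'n \<Rightarrow> real^'n \<Rightarrow> (real^'n) set" where
  "F_i phi H g xr =
     (if concave_on UNIV phi then {x. 0 \<le> phi x}
      else if convex_on UNIV phi then {x. 0 \<le> phi xr + g \<bullet> (x - xr)}
      else {x. 1/2 * ((x - xr) \<bullet> (H *v (x - xr))) \<le> phi xr + g \<bullet> (x - xr)})"

end

theory Submission
  imports Defs
begin

lemma convex_quot_conv:
  fixes h :: "real \<Rightarrow> real"
  assumes cv: "convex_on UNIV h" and h0: "h 0 = 0"
  shows "\<exists>L. ((\<lambda>a. h a / a) \<longlongrightarrow> L) (at_right 0)"
proof -
  have mono: "h a / a \<le> h b / b" if "0 < a" "a \<le> b" for a b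
  proof (cases "a = b")
    case False
    then have "a < b" using that by simp
    from convex_on_slope_le(1)[OF cv _ _ \<open>0 < a\<close> this]
    show ?thesis using h0 by simp
  qed simp
  have bnd: "- h (-1) \<le> h a / a" if "0 < a" for a
  proof -
    have "-1 < (0::real)" by simp
    from convex_on_slope_le[OF cv _ _ this \<open>0 < a\<close>]
    show ?thesis using h0 that by simp
  qed
  have "((\<lambda>a. h a / a) \<longlongrightarrow> Inf ((\<lambda>a. h a / a) ` ({0<..} \<inter> UNIV))) (at 0 within ({0<..} \<inter> UNIV))"
    by (rule Lim_right_bound[where K="- h (-1)"]) (use mono bnd in auto)
  then show ?thesis by auto
qed

lemma quad_cont: "continuous_on UNIV (\<lambda>x. (x - xr) \<bullet> ((H::real^'n^'n) *v (x - xr)))"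
proof -
  have e: "(\<lambda>x. H *v (x - xr)) = (\<lambda>x. H *v x - H *v xr)" by (simp add: matrix_vector_mult_diff_distrib)
  have "continuous_on UNIV (\<lambda>x. H *v (x - xr))"
    unfolding e by (intro continuous_intros)
  then show ?thesis by (intro continuous_intros)
qed

lemma quad_ineq:
  fixes t b c :: real
  assumes "0 < b" "t \<in> {0<..<b / (\<bar>c\<bar> + 1)}"
  shows "1/2 * (t * t * c) < t * b"
proof -
  have t: "0 < t" "t * (\<bar>c\<bar> + 1) < b" using assms by (auto simp: field_simps)
  have "t * \<bar>c\<bar> < b" using t by (smt (verit, ccfv_SIG) distrib_left mult_pos_pos)
  then have "t * c < 2 * b" using assms by (smt (verit, best) abs_ge_self mult_left_mono t(1))
  then have "t * (t * c) < t * (2 * b)" using t by simp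
  then show ?thesis by (simp add: algebra_simps)
qed

lemma active_dir:
  fixes phi :: "real^'n \<Rightarrow> real"
  assumes sc: "semi_convex_wrt phi H" and z: "phi xr = 0" and dd: "dir_deriv phi xr v < 0"
  shows "eventually (\<lambda>t. 0 < phi (xr + t *\<^sub>R (- v))) (at_right 0)"
proof -
  define psi where "psi x = phi x + 1/2 * ((x - xr) \<bullet> (H *v (x - xr)))" for x
  have cpsi: "convex_on UNIV psi" using sc unfolding semi_convex_wrt_def psi_def by blast
  define c where "c = v \<bullet> (H *v v)"
  have psiv: "psi (xr + a *\<^sub>R v) = phi (xr + a *\<^sub>R v) + 1/2 * (a * a * c)" for a
    by (simp add: psi_def c_def matrix_vector_mult_scaleR)
  have psiv': "psi (xr + a *\<^sub>R - v) = phi (xr + a *\<^sub>R - v) + 1/2 * (a * a * c)" for a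
    by (simp add: psi_def c_def matrix_vector_mult_scaleR flip: scaleR_minus_left)
  have psi0: "psi xr = 0" using z by (simp add: psi_def)
  define h where "h a = psi (xr + a *\<^sub>R v)" for a :: real
  have cvx: "convex_on UNIV h"
  proof (rule convex_onI)
    fix t x y :: real assume t: "0 < t" "t < 1"
    have eq: "(1 - t) *\<^sub>R (xr + x *\<^sub>R v) + t *\<^sub>R (xr + y *\<^sub>R v) = xr + ((1 - t) * x + t * y) *\<^sub>R v"
      by (simp add: algebra_simps)
    have "psi ((1 - t) *\<^sub>R (xr + x *\<^sub>R v) + t *\<^sub>R (xr + y *\<^sub>R v)) \<le> (1 - t) * psi (xr + x *\<^sub>R v) + t * psi (xr + y *\<^sub>R v)"
      using convex_onD[OF cpsi, of t] t by auto
    then show "h ((1 - t) *\<^sub>R x + t *\<^sub>R y) \<le> (1 - t) * h x + t * h y"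
      unfolding h_def eq by (simp add: algebra_simps)
  qed simp
  have h0: "h 0 = 0" using psi0 by (simp add: h_def)
  obtain L where L: "((\<lambda>a. h a / a) \<longlongrightarrow> L) (at_right 0)"
    using convex_quot_conv[OF cvx h0] by blast
  have fe: "\<forall>\<^sub>F a in at_right 0. (\<lambda>a. h a / a - 1/2 * (a * c)) a = (phi (xr + a *\<^sub>R v) - phi xr) / a"
    using eventually_at_right_less[of "0::real"]
    by eventually_elim (simp add: h_def psiv z field_simps)
  have "((\<lambda>a. h a / a - 1/2 * (a * c)) \<longlongrightarrow> L - 1/2 * (0 * c)) (at_right 0)"
    using L by (intro tendsto_intros)
  then have "((\<lambda>a. (phi (xr + a *\<^sub>R v) - phi xr) / a) \<longlongrightarrow> L) (at_right 0)"
    using tendsto_cong[OF fe] by simp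
  then have "dir_deriv phi xr v = L"
    unfolding dir_deriv_def by (intro tendsto_Lim) (simp_all add: trivial_limit_at_right_real)
  then have Ln: "L < 0" using dd by simp
  then have ev: "eventually (\<lambda>a. h a / a < L / 2) (at_right 0)" using order_tendstoD(2)[OF L, of "L/2"] by simp
  have "((\<lambda>a. a * c) \<longlongrightarrow> 0 * c) (at_right 0)" by (intro tendsto_intros)
  then have ev2: "eventually (\<lambda>a. a * c < - L) (at_right 0)" using order_tendstoD(2) Ln by fastforce
  show ?thesis
    using ev ev2 eventually_at_right_less[of "0::real"]
  proof eventually_elim
    case (elim a)
    then have hp: "h a < a * (L / 2)" by (simp add: divide_less_eq mult.commute)
    have eq: "(1 - 1/2) *\<^sub>R (xr + a *\<^sub>R v) + (1/2::real) *\<^sub>R (xr + a *\<^sub>R - v) = xr"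
      by (simp add: algebra_simps flip: scaleR_add_left)
    have "psi ((1 - 1/2) *\<^sub>R (xr + a *\<^sub>R v) + (1/2::real) *\<^sub>R (xr + a *\<^sub>R - v)) \<le> (1 - 1/2) * psi (xr + a *\<^sub>R v) + 1/2 * psi (xr + a *\<^sub>R - v)"
      using convex_onD[OF cpsi, of "1/2"] by auto
    then have "0 \<le> psi (xr + a *\<^sub>R v) + psi (xr + a *\<^sub>R - v)" unfolding eq psi0 by simp
    then have A: "0 \<le> h a + phi (xr + a *\<^sub>R - v) + 1/2 * (a * a * c)" unfolding h_def psiv' by simp
    have "a * (a * c) < a * (- L)" using elim by (intro mult_strict_left_mono) auto
    then show ?case using A hp by (simp add: algebra_simps)
  qed
qed

theorem lemma4p2:
  fixes J :: "real^('n::{finite,wellorder}) \<Rightarrow> real"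
    and phi :: "nat \<Rightarrow> real^('n::{finite,wellorder}) \<Rightarrow> real"
    and H :: "nat \<Rightarrow> real^('n::{finite,wellorder})^('n::{finite,wellorder})"
    and N :: nat
    and Gamma :: "(real^('n::{finite,wellorder})) set"
    and xr vs :: "real^('n::{finite,wellorder})"
    and g :: "nat \<Rightarrow> real^('n::{finite,wellorder})"
  assumes J_smooth: "smooth_fun J"
    and J_strict: "strictly_convex_on UNIV J"
    and J_nonneg: "\<forall>x. 0 \<le> J x"
    and Gamma_closed: "closed Gamma"
    and Gamma_connected: "connected Gamma"
    and Gamma_polytopes: "\<forall>x\<in>Gamma. \<exists>P. polytope P \<and> aff_dim P = int CARD('n) \<and> x \<in> P \<and> P \<subseteq> Gamma"
    and Gamma_decomp: "Gamma = (\<Inter>i<N. {x. 0 \<le> phi i x})"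
    and bd: "\<forall>i<N. frontier {x. 0 \<le> phi i x} = {x. phi i x = 0}"
    and phi_cont: "\<forall>i<N. continuous_on UNIV (phi i)"
    and phi_pws: "\<forall>i<N. piecewise_smooth (phi i)"
    and phi_semi: "\<forall>i<N. semi_convex_wrt (phi i) (H i)"
    and A1: "\<forall>i<N. \<forall>x. subdiff (phi i) x \<noteq> {0}"
    and A2: "\<forall>i<N. \<forall>x. phi i x = 0 \<longrightarrow> 0 \<notin> subdiff (phi i) x"
    and A3: "\<forall>x. {i. i < N \<and> phi i x = 0} \<noteq> {} \<longrightarrow>
               (\<exists>v. \<forall>i\<in>{i. i < N \<and> phi i x = 0}. dir_deriv (phi i) x v < 0)"
    and vs_opt: "is_opt_dir J phi N xr vs"
    and g_opt: "\<forall>i<N. is_opt_subgrad J phi i xr vs (g i)"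
    and xr_in: "xr \<in> Gamma"
  shows "xr \<in> (\<Inter>i<N. F_i (phi i) (H i) (g i) xr)
         \<and> interior (\<Inter>i<N. F_i (phi i) (H i) (g i) xr) \<noteq> {}"
proof -
  let ?F = "\<lambda>i. F_i (phi i) (H i) (g i) xr"
  have nn: "\<And>i. i < N \<Longrightarrow> 0 \<le> phi i xr" using xr_in Gamma_decomp by auto
  have xrF: "\<And>i. i < N \<Longrightarrow> xr \<in> ?F i" using nn by (simp add: F_i_def)
  obtain v where v: "\<forall>i\<in>{i. i < N \<and> phi i xr = 0}. dir_deriv (phi i) xr v < 0"
    using A3 by (cases "{i. i < N \<and> phi i xr = 0} = {}") auto
  define w where "w = - v"
  define Ob where "Ob i = (if concave_on UNIV (phi i) then {x. 0 < phi i x}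
      else if convex_on UNIV (phi i) then {x. 0 < phi i xr + g i \<bullet> (x - xr)}
      else {x. 1/2 * ((x - xr) \<bullet> (H i *v (x - xr))) < phi i xr + g i \<bullet> (x - xr)})" for i
  have key: "open (Ob i) \<and> Ob i \<subseteq> ?F i \<and> eventually (\<lambda>t. xr + t *\<^sub>R w \<in> Ob i) (at_right 0)"
    if i: "i < N" for i
  proof -
    have pc: "continuous_on UNIV (phi i)" using phi_cont i by auto
    have op: "open (Ob i)"
      unfolding Ob_def using pc quad_cont[of xr "H i"]
      by (auto intro!: open_Collect_less continuous_intros)
    have sub: "Ob i \<subseteq> ?F i" unfolding Ob_def F_i_def by auto
    have ev: "eventually (\<lambda>t. xr + t *\<^sub>R w \<in> Ob i) (at_right 0)"
    proof (cases "phi i xr = 0")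
      case False
      then have pos: "0 < phi i xr" using nn[OF i] by simp
      then have "xr \<in> Ob i" unfolding Ob_def by simp
      moreover have "((\<lambda>t. xr + t *\<^sub>R w) \<longlongrightarrow> xr + 0 *\<^sub>R w) (at_right 0)"
        by (intro tendsto_intros)
      ultimately show ?thesis using topological_tendstoD op by fastforce
    next
      case True
      have dd: "dir_deriv (phi i) xr v < 0" using v i True by auto
      show ?thesis
      proof (cases "concave_on UNIV (phi i)")
        case True
        have "eventually (\<lambda>t. 0 < phi i (xr + t *\<^sub>R (- v))) (at_right 0)"
          by (rule active_dir[OF _ \<open>phi i xr = 0\<close> dd]) (use phi_semi i in auto)
        then show ?thesis unfolding Ob_def w_def using True by simp
      next
        case nc: False
        have "g i \<in> DF phi i xr vs" using g_opt i by (simp add: is_opt_subgrad_def)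
        then have "g i \<in> subdiff (phi i) xr" using True by (simp add: DF_def)
        then have "g i \<bullet> v \<le> dir_deriv (phi i) xr v" by (simp add: subdiff_def)
        then have b: "0 < g i \<bullet> w" using dd by (simp add: w_def)
        show ?thesis
        proof (cases "convex_on UNIV (phi i)")
          case True
          show ?thesis using eventually_at_right_less[of "0::real"]
            by eventually_elim (use b True nc \<open>phi i xr = 0\<close> in \<open>simp add: Ob_def\<close>)
        next
          case False
          define c where "c = w \<bullet> (H i *v w)"
          have bc: "0 < (g i \<bullet> w) / (\<bar>c\<bar> + 1)" using b by simp
          show ?thesis using eventually_at_right_real[OF bc]
          proof eventually_elim
            case (elim t)
            from quad_ineq[OF b elim] show ?case
              using False nc \<open>phi i xr = 0\<close>
              by (simp add: Ob_def c_def matrix_vector_mult_scaleR)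
          qed
        qed
      qed
    qed
    show ?thesis using op sub ev by blast
  qed
  have "eventually (\<lambda>t. \<forall>i\<in>{..<N}. xr + t *\<^sub>R w \<in> Ob i) (at_right 0)"
    using key by (intro eventually_ball_finite) auto
  then obtain t where t: "\<forall>i\<in>{..<N}. xr + t *\<^sub>R w \<in> Ob i"
    using eventually_happens[of _ "at_right (0::real)"] trivial_limit_at_right_real by blast
  have "open (\<Inter>i<N. Ob i)" using key by (intro open_INT) auto
  moreover have "(\<Inter>i<N. Ob i) \<subseteq> (\<Inter>i<N. ?F i)" using key by blast
  ultimately have "(\<Inter>i<N. Ob i) \<subseteq> interior (\<Inter>i<N. ?F i)" by (rule interior_maximal[rotated])
  moreover have "xr + t *\<^sub>R w \<in> (\<Inter>i<N. Ob i)" using t by auto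
  ultimately have "interior (\<Inter>i<N. ?F i) \<noteq> {}" by blast
  then show ?thesis using xrF by blast
qed

end
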